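(* Let $d\geq 0$ and $0<i\leq d+1$ be integers, and write $d+1=qi+r$ with integers $q\geq 0$, $1\leq r\leq i$. Let $\Delta\in\mathcal{C}(i,d)$. Then $f_j(\Delta)\geq f_j(S(i,d))$ for every $1\leq j\leq r$.
   Context: All simplicial complexes are finite abstract simplicial complexes; $f_j(\Delta)$ denotes the number of $j$-dimensional faces of $\Delta$. A set $F$ of vertices is a missing face of $\Delta$ if $F\notin\Delta$ but every proper subset of $F$ is in $\Delta$; its dimension is $|F|-1$. $\mathcal{C}(i,d)$ denotes the family of $d$-dimensional simplicial complexes $\Delta$ with $\tilde H_d(\Delta;\mathbb{Z})\neq 0$ (reduced homology) and with no missing faces of dimension $>i$. For integers $d\geq 0$, $i>0$ with $d+1=qi+r$ ($q\geq 0$, $1\leq r\leq i$), $S(i,d)$ is the simplicial join of $q$ copies of $\partial\sigma^i$ and one copy of $\partial\sigma^r$ on pairwise disjoint vertex sets, where $\partial\sigma^k$ is the boundary complex of the $k$-simplex. *)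

theory Defs
  imports Main
begin

text \<open>A complex is a finite, nonempty, downward closed family of finite vertex sets.
  Vertices come from a linearly ordered type; the order is only used to orient simplices.\<close>

definition simplicial_complex :: "'a set set \<Rightarrow> bool" where
  "simplicial_complex K \<longleftrightarrow> finite K \<and> K \<noteq> {} \<and> (\<forall>F\<in>K. finite F) \<and>
     (\<forall>F\<in>K. \<forall>G. G \<subseteq> F \<longrightarrow> G \<in> K)"

definition fvec :: "'a set set \<Rightarrow> nat \<Rightarrow> nat" where
  "fvec K j = card {F \<in> K. card F = j + 1}"

definition complex_dim :: "'a set set \<Rightarrow> nat \<Rightarrow> bool" where
  "complex_dim K d \<longleftrightarrow> (\<exists>F\<in>K. card F = d + 1) \<and> (\<forall>F\<in>K. card F \<le> d + 1)"

definition missing_face :: "'a set set \<Rightarrow> 'a set \<Rightarrow> bool" where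
  "missing_face K F \<longleftrightarrow> finite F \<and> F \<notin> K \<and> (\<forall>G. G \<subset> F \<longrightarrow> G \<in> K)"

text \<open>An integral k-chain: integer coefficients on the k-faces (oriented by the vertex order).\<close>
definition is_chain :: "'a set set \<Rightarrow> nat \<Rightarrow> ('a set \<Rightarrow> int) \<Rightarrow> bool" where
  "is_chain K k c \<longleftrightarrow> (\<forall>F. c F \<noteq> 0 \<longrightarrow> F \<in> K \<and> card F = k + 1)"

text \<open>Augmented simplicial boundary: removing the vertex in position p (counted from 0 in
  increasing order) contributes sign (-1)^p; the empty face is included (reduced homology).\<close>
definition bdry :: "'a::linorder set set \<Rightarrow> ('a set \<Rightarrow> int) \<Rightarrow> 'a set \<Rightarrow> int" where
  "bdry K c G = (\<Sum>F\<in>{F \<in> K. G \<subseteq> F \<and> card (F - G) = 1}.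
      (-1) ^ card {x \<in> G. x < the_elem (F - G)} * c F)"

definition reduced_homology_nonzero :: "'a::linorder set set \<Rightarrow> nat \<Rightarrow> bool" where
  "reduced_homology_nonzero K k \<longleftrightarrow>
     (\<exists>z. is_chain K k z \<and> (\<forall>G. bdry K z G = 0) \<and>
          \<not> (\<exists>b. is_chain K (k + 1) b \<and> bdry K b = z))"

definition class_C :: "nat \<Rightarrow> nat \<Rightarrow> 'a::linorder set set \<Rightarrow> bool" where
  "class_C i d K \<longleftrightarrow> simplicial_complex K \<and> complex_dim K d \<and>
     reduced_homology_nonzero K d \<and> (\<forall>F. missing_face K F \<longrightarrow> card F \<le> i + 1)"

definition bd_simplex :: "'a set \<Rightarrow> 'a set set" where
  "bd_simplex V = {F. F \<subseteq> V \<and> F \<noteq> V}"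

definition sjoin :: "'a set set \<Rightarrow> 'a set set \<Rightarrow> 'a set set" where
  "sjoin K L = {F \<union> G | F G. F \<in> K \<and> G \<in> L}"

text \<open>Vertex blocks: q blocks of size i+1 and one block of size r+1, pairwise disjoint,
  where d+1 = q*i + r with 1 \<le> r \<le> i, i.e. q = d div i, r = d mod i + 1.\<close>
definition S_blocks :: "nat \<Rightarrow> nat \<Rightarrow> nat set list" where
  "S_blocks i d = (let q = d div i; r = d mod i + 1 in
     map (\<lambda>m. {m * (i + 1) ..< (m + 1) * (i + 1)}) [0..<q] @
     [{q * (i + 1) ..< q * (i + 1) + r + 1}])"

definition S_complex :: "nat \<Rightarrow> nat \<Rightarrow> nat set set" where
  "S_complex i d = foldr (\<lambda>V K. sjoin (bd_simplex V) K) (S_blocks i d) {{}}"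

end

theory Submission
  imports Defs
begin


lemma sc_down: "simplicial_complex K \<Longrightarrow> F \<in> K \<Longrightarrow> G \<subseteq> F \<Longrightarrow> G \<in> K"
  unfolding simplicial_complex_def by blast
lemma sc_ffin: "simplicial_complex K \<Longrightarrow> F \<in> K \<Longrightarrow> finite F"
  unfolding simplicial_complex_def by blast
lemma sc_fin: "simplicial_complex K \<Longrightarrow> finite K"
  unfolding simplicial_complex_def by blast
lemma sc_empty: "simplicial_complex K \<Longrightarrow> {} \<in> K"
  unfolding simplicial_complex_def by blast

lemma min_nonface:
  assumes "finite X" "X \<notin> K"
  shows "\<exists>N\<subseteq>X. N \<notin> K \<and> (\<forall>Y. Y \<subset> N \<longrightarrow> Y \<in> K)"
  using assms
proof (induction X rule: finite_psubset_induct)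
  case (psubset A)
  show ?case
  proof (cases "\<forall>Y. Y \<subset> A \<longrightarrow> Y \<in> K")
    case True
    have "A \<subseteq> A \<and> A \<notin> K \<and> (\<forall>Y. Y \<subset> A \<longrightarrow> Y \<in> K)" using True psubset.prems by simp
    then show ?thesis by (rule exI)
  next
    case False
    then obtain Y where Y: "Y \<subset> A" "Y \<notin> K" by blast
    from psubset.IH[OF Y] obtain N where "N \<subseteq> Y" "N \<notin> K" "\<forall>Z. Z \<subset> N \<longrightarrow> Z \<in> K" by blast
    then show ?thesis using Y(1) by (meson order.trans psubset_imp_subset)
  qed
qed

definition sgn2 :: "'a::linorder set \<Rightarrow> 'a set \<Rightarrow> int" where
  "sgn2 s G = (-1) ^ card {p \<in> s \<times> G. snd p < fst p}"

lemma sgn2_nz: "sgn2 s G \<noteq> 0" unfolding sgn2_def by simp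

lemma sgn2_insert:
  assumes "finite s" "finite H" "x \<notin> H"
  shows "sgn2 s (insert x H) = sgn2 s H * (-1) ^ card {t \<in> s. x < t}"
proof -
  have eq: "{p \<in> s \<times> insert x H. snd p < fst p} = {p \<in> s \<times> H. snd p < fst p} \<union> (\<lambda>t. (t, x)) ` {t \<in> s. x < t}"
    by auto
  have d: "{p \<in> s \<times> H. snd p < fst p} \<inter> (\<lambda>t. (t, x)) ` {t \<in> s. x < t} = {}" using assms(3) by auto
  have "card {p \<in> s \<times> insert x H. snd p < fst p} = card {p \<in> s \<times> H. snd p < fst p} + card {t \<in> s. x < t}"
    unfolding eq
    apply (subst card_Un_disjoint)
    using assms d by (auto simp: card_image inj_on_def)
  then show ?thesis unfolding sgn2_def by (simp add: power_add)
qed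

lemma card_split_lt:
  assumes "finite s" "x \<notin> s"
  shows "card {t \<in> s. t < (x::'a::linorder)} + card {t \<in> s. x < t} = card s"
proof -
  have e: "s = {t \<in> s. t < x} \<union> {t \<in> s. x < t}" using assms(2) less_linear by blast
  have "card ({t \<in> s. t < x} \<union> {t \<in> s. x < t}) = card {t \<in> s. t < x} + card {t \<in> s. x < t}"
    by (rule card_Un_disjoint) (use assms(1) in auto)
  then show ?thesis using e by simp
qed

lemma card_Un_lt:
  assumes "finite s" "finite H" "H \<inter> s = {}"
  shows "card {y \<in> H \<union> s. y < (x::'a::linorder)} = card {y \<in> H. y < x} + card {y \<in> s. y < x}"
proof -
  have e: "{y \<in> H \<union> s. y < x} = {y \<in> H. y < x} \<union> {y \<in> s. y < x}" by auto
  have "card ({y \<in> H. y < x} \<union> {y \<in> s. y < x}) = card {y \<in> H. y < x} + card {y \<in> s. y < x}"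
    by (rule card_Un_disjoint) (use assms in auto)
  then show ?thesis using e by simp
qed



definition lk :: "'a set set \<Rightarrow> 'a set \<Rightarrow> 'a set set" where
  "lk K s = {G. G \<inter> s = {} \<and> G \<union> s \<in> K}"
definition lkc :: "'a::linorder set \<Rightarrow> ('a set \<Rightarrow> int) \<Rightarrow> 'a set \<Rightarrow> int" where
  "lkc s z G = (if G \<inter> s = {} then sgn2 s G * z (G \<union> s) else 0)"
definition supp :: "('a set \<Rightarrow> int) \<Rightarrow> 'a set" where
  "supp z = \<Union>{F. z F \<noteq> 0}"

definition good :: "nat \<Rightarrow> nat \<Rightarrow> 'a::linorder set set \<Rightarrow> ('a set \<Rightarrow> int) \<Rightarrow> bool" where
  "good i d K z \<longleftrightarrow> simplicial_complex K \<and> (\<forall>F\<in>K. card F \<le> d+1) \<and> is_chain K d z \<and>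
     (\<exists>F. z F \<noteq> 0) \<and> (\<forall>G. bdry K z G = 0) \<and> (\<forall>F. missing_face K F \<longrightarrow> card F \<le> i+1)"

lemma lk_sc:
  assumes "simplicial_complex K" "s \<in> K"
  shows "simplicial_complex (lk K s)"
proof -
  have "lk K s \<subseteq> (\<lambda>F. F - s) ` K"
  proof
    fix G assume "G \<in> lk K s"
    then have "G = (G \<union> s) - s" "G \<union> s \<in> K" unfolding lk_def by auto
    then show "G \<in> (\<lambda>F. F - s) ` K" by blast
  qed
  then have f: "finite (lk K s)" using sc_fin[OF assms(1)] finite_surj by blast
  have "{} \<in> lk K s" using assms unfolding lk_def by simp
  moreover have "\<forall>F\<in>lk K s. finite F"
  proof
    fix F assume "F \<in> lk K s"
    then have "F \<union> s \<in> K" unfolding lk_def by blast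
    then have "finite (F \<union> s)" using sc_ffin[OF assms(1)] by blast
    then show "finite F" by simp
  qed
  moreover have "\<forall>F\<in>lk K s. \<forall>G. G \<subseteq> F \<longrightarrow> G \<in> lk K s"
  proof (intro ballI allI impI)
    fix F G assume "F \<in> lk K s" "G \<subseteq> F"
    then have "F \<inter> s = {}" "F \<union> s \<in> K" unfolding lk_def by auto
    moreover have "G \<union> s \<subseteq> F \<union> s" using \<open>G \<subseteq> F\<close> by blast
    ultimately have "G \<inter> s = {}" "G \<union> s \<in> K" using \<open>G \<subseteq> F\<close> sc_down[OF assms(1)] by blast+
    then show "G \<in> lk K s" unfolding lk_def by blast
  qed
  ultimately show ?thesis using f unfolding simplicial_complex_def by blast
qed

lemma lk_dim:
  assumes "simplicial_complex K" "\<forall>F\<in>K. card F \<le> d+1" "finite s" "G \<in> lk K s"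
  shows "card G + card s \<le> d + 1"
proof -
  have "G \<inter> s = {}" "G \<union> s \<in> K" using assms(4) unfolding lk_def by auto
  moreover have "finite G" using calculation(2) sc_ffin[OF assms(1)] by auto
  ultimately show ?thesis using assms(2,3) by (metis card_Un_disjoint)
qed

lemma lk_missing:
  assumes "simplicial_complex K" "s \<in> K" "\<forall>F. missing_face K F \<longrightarrow> card F \<le> i+1"
    and "missing_face (lk K s) M"
  shows "card M \<le> i+1"
proof (cases "M \<inter> s = {}")
  case False
  then obtain x where x: "x \<in> M" "x \<in> s" by blast
  have "M = {x}"
  proof (rule ccontr)
    assume "M \<noteq> {x}"
    then have "{x} \<subset> M" using x by auto
    then have "{x} \<in> lk K s" using assms(4) unfolding missing_face_def by blast
    then show False using x unfolding lk_def by auto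
  qed
  then show ?thesis by simp
next
  case True
  have fM: "finite M" using assms(4) unfolding missing_face_def by blast
  have fs: "finite s" using sc_ffin[OF assms(1,2)] .
  have "M \<union> s \<notin> K" using True assms(4) unfolding missing_face_def lk_def by blast
  then obtain N where N: "N \<subseteq> M \<union> s" "N \<notin> K" "\<forall>Y. Y \<subset> N \<longrightarrow> Y \<in> K"
    using min_nonface[of "M \<union> s" K] fM fs by blast
  have "M \<subseteq> N"
  proof
    fix y assume y: "y \<in> M"
    show "y \<in> N"
    proof (rule ccontr)
      assume "y \<notin> N"
      then have "N \<subseteq> (M - {y}) \<union> s" using N(1) by auto
      moreover have "M - {y} \<in> lk K s" using assms(4) y unfolding missing_face_def by blast
      ultimately have "N \<in> K" using sc_down[OF assms(1)] unfolding lk_def by blast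
      then show False using N(2) by blast
    qed
  qed
  have "missing_face K N" unfolding missing_face_def using N fM fs
    by (meson finite_UnI finite_subset)
  then have "card N \<le> i+1" using assms(3) by blast
  moreover have "finite N" using N(1) fM fs by (meson finite_UnI finite_subset)
  ultimately show ?thesis using \<open>M \<subseteq> N\<close> by (meson card_mono le_trans)
qed

lemma lkc_nz: "lkc s z G \<noteq> 0 \<longleftrightarrow> G \<inter> s = {} \<and> z (G \<union> s) \<noteq> 0"
  unfolding lkc_def using sgn2_nz by auto

lemma lkc_chain:
  assumes "simplicial_complex K" "is_chain K d z" "s \<in> K" "card s \<le> d"
  shows "is_chain (lk K s) (d - card s) (lkc s z)"
  unfolding is_chain_def
proof (intro allI impI)
  fix G assume "lkc s z G \<noteq> 0"
  then have G: "G \<inter> s = {}" "z (G \<union> s) \<noteq> 0" using lkc_nz by auto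
  then have "G \<union> s \<in> K" "card (G \<union> s) = d + 1" using assms(2) unfolding is_chain_def by auto
  moreover have "finite G" "finite s" using calculation(1) sc_ffin[OF assms(1)] by auto
  ultimately have "card G + card s = d + 1" using G(1) by (metis card_Un_disjoint)
  then show "G \<in> lk K s \<and> card G = d - card s + 1"
    using \<open>G \<union> s \<in> K\<close> G(1) assms(4) unfolding lk_def by auto
qed

lemma neg1_sq: "(-1::int)^e * (-1)^e = 1"
  by (induct e) auto

lemma lkc_cycle:
  assumes sc: "simplicial_complex K" and cyc: "\<forall>G. bdry K z G = 0" and sK: "s \<in> K"
  shows "bdry (lk K s) (lkc s z) H = 0"
proof (cases "H \<inter> s = {}")
  case False
  have e: "{F \<in> lk K s. H \<subseteq> F \<and> card (F - H) = 1} = {}" using False unfolding lk_def by auto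
  show ?thesis unfolding bdry_def e by simp
next
  case True
  have fs: "finite s" using sc_ffin[OF sc sK] .
  define A1 where "A1 = {F \<in> lk K s. H \<subseteq> F \<and> card (F - H) = 1}"
  define A2 where "A2 = {F \<in> K. H \<union> s \<subseteq> F \<and> card (F - (H \<union> s)) = 1}"
  define g where "g F = (-1) ^ card {x \<in> H. x < the_elem (F - H)} * lkc s z F" for F
  define h where "h F = (-1) ^ card {x \<in> H \<union> s. x < the_elem (F - (H \<union> s))} * z F" for F
  define c where "c = sgn2 s H * (-1) ^ card s"
  have b2: "sum h A2 = 0" using cyc unfolding bdry_def h_def A2_def by metis
  have key: "g F = c * h (F \<union> s)" if F: "F \<in> A1" for F
  proof -
    have F1: "F \<inter> s = {}" "F \<union> s \<in> K" "H \<subseteq> F" "card (F - H) = 1" using F unfolding A1_def lk_def by auto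
    then obtain x where x: "F - H = {x}" using card_1_singletonE by blast
    have xH: "x \<notin> H" "x \<notin> s" and Fx: "F = insert x H" using x F1 by auto
    have fF: "finite F" using sc_ffin[OF sc F1(2)] by simp
    have fH: "finite H" using fF F1(3) finite_subset by blast
    have e2: "F \<union> s - (H \<union> s) = {x}" using x F1(1) by auto
    define a where "a = card {y \<in> H. y < x}"
    define b where "b = card {t \<in> s. x < t}"
    define e where "e = card {t \<in> s. t < x}"
    have eb: "e + b = card s" unfolding e_def b_def using card_split_lt[OF fs xH(2)] .
    have hs: "card {y \<in> H \<union> s. y < x} = a + e" unfolding a_def e_def using card_Un_lt[OF fs fH] True by simp
    have "g F = (-1)^a * (sgn2 s H * (-1)^b * z (F \<union> s))"
      unfolding g_def lkc_def using x F1(1) sgn2_insert[OF fs fH xH(1)] Fx a_def b_def by simp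
    moreover have "h (F \<union> s) = (-1)^(a+e) * z (F \<union> s)" unfolding h_def e2 using hs by simp
    moreover have p: "(-1::int)^(e+b) * (-1)^(a+e) = (-1)^a * (-1)^b"
    proof -
      have "(-1::int)^(e+b) * (-1)^(a+e) = (-1)^a * (-1)^b * ((-1)^e * (-1)^e)"
        by (simp add: power_add algebra_simps)
      then show ?thesis using neg1_sq by simp
    qed
    ultimately have "c * h (F \<union> s) = sgn2 s H * ((-1::int)^(e+b) * (-1)^(a+e)) * z (F \<union> s)"
      and "g F = sgn2 s H * ((-1)^a * (-1)^b) * z (F \<union> s)"
      unfolding c_def eb[symmetric] by (simp_all add: algebra_simps)
    then show ?thesis using p by simp
  qed
  have "sum g A1 = sum (\<lambda>F. c * h F) A2"
  proof (rule sum.reindex_bij_witness[of A1 "\<lambda>F. F - s" "\<lambda>F. F \<union> s"])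
    fix a assume "a \<in> A1" then show "a \<union> s - s = a" unfolding A1_def lk_def by auto
  next
    fix a assume a: "a \<in> A1"
    then have "a \<inter> s = {}" "a \<union> s \<in> K" "H \<subseteq> a" "card (a - H) = 1" unfolding A1_def lk_def by auto
    moreover have "a \<union> s - (H \<union> s) = a - H" using calculation(1) by auto
    ultimately show "a \<union> s \<in> A2" unfolding A2_def by auto
  next
    fix b assume "b \<in> A2" then show "b - s \<union> s = b" unfolding A2_def by auto
  next
    fix b assume b: "b \<in> A2"
    then have "b \<in> K" "H \<union> s \<subseteq> b" "card (b - (H \<union> s)) = 1" unfolding A2_def by auto
    moreover have "b - s - H = b - (H \<union> s)" by auto
    moreover have "b - s \<union> s = b" using calculation(2) by auto
    ultimately show "b - s \<in> A1" unfolding A1_def lk_def using True by auto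
  next
    fix a assume "a \<in> A1" then show "c * h (a \<union> s) = g a" using key by simp
  qed
  also have "\<dots> = c * sum h A2" by (simp add: sum_distrib_left)
  finally have "sum g A1 = 0" using b2 by simp
  then show ?thesis unfolding bdry_def A1_def g_def by simp
qed



lemma good_sc: "good i d K z \<Longrightarrow> simplicial_complex K" unfolding good_def by blast
lemma good_dim: "good i d K z \<Longrightarrow> F \<in> K \<Longrightarrow> card F \<le> d+1" unfolding good_def by blast
lemma good_chain: "good i d K z \<Longrightarrow> z F \<noteq> 0 \<Longrightarrow> F \<in> K \<and> card F = d+1"
  unfolding good_def is_chain_def by blast
lemma good_cyc: "good i d K z \<Longrightarrow> bdry K z G = 0" unfolding good_def by blast
lemma good_miss: "good i d K z \<Longrightarrow> missing_face K F \<Longrightarrow> card F \<le> i+1" unfolding good_def by blast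

lemma supp_iff: "x \<in> supp z \<longleftrightarrow> (\<exists>F. z F \<noteq> 0 \<and> x \<in> F)" unfolding supp_def by blast

lemma good_supp_fin: assumes "good i d K z" shows "finite (supp z)"
proof -
  have "{F. z F \<noteq> 0} \<subseteq> K" using good_chain[OF assms] by blast
  then have "finite {F. z F \<noteq> 0}" using sc_fin[OF good_sc[OF assms]] finite_subset by blast
  moreover have "\<forall>F\<in>{F. z F \<noteq> 0}. finite F" using good_chain[OF assms] sc_ffin[OF good_sc[OF assms]] by blast
  ultimately show ?thesis unfolding supp_def by blast
qed

lemma supp_lkc: "x \<in> supp (lkc s z) \<longleftrightarrow> x \<notin> s \<and> (\<exists>F. z F \<noteq> 0 \<and> s \<subseteq> F \<and> x \<in> F)"
proof
  assume "x \<in> supp (lkc s z)"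
  then obtain G where "lkc s z G \<noteq> 0" "x \<in> G" unfolding supp_iff by blast
  then show "x \<notin> s \<and> (\<exists>F. z F \<noteq> 0 \<and> s \<subseteq> F \<and> x \<in> F)" using lkc_nz[of s z G] by blast
next
  assume "x \<notin> s \<and> (\<exists>F. z F \<noteq> 0 \<and> s \<subseteq> F \<and> x \<in> F)"
  then obtain F where F: "x \<notin> s" "z F \<noteq> 0" "s \<subseteq> F" "x \<in> F" by blast
  then have "(F - s) \<inter> s = {}" "(F - s) \<union> s = F" by auto
  then have "lkc s z (F - s) \<noteq> 0" using lkc_nz[of s z "F - s"] F by simp
  then show "x \<in> supp (lkc s z)" unfolding supp_iff using F by blast
qed

lemma good_lk:
  assumes g: "good i d K z" and F: "z F \<noteq> 0" "s \<subseteq> F" and k: "card s \<le> d"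
  shows "good i (d - card s) (lk K s) (lkc s z)"
proof -
  have sc: "simplicial_complex K" using good_sc[OF g] .
  have FK: "F \<in> K" using good_chain[OF g F(1)] by blast
  have sK: "s \<in> K" using sc_down[OF sc FK F(2)] .
  have fs: "finite s" using sc_ffin[OF sc sK] .
  have 1: "simplicial_complex (lk K s)" using lk_sc[OF sc sK] .
  have 2: "\<forall>G\<in>lk K s. card G \<le> d - card s + 1"
    using lk_dim[OF sc _ fs] good_dim[OF g] k by (metis add.commute add_le_imp_le_diff diff_add_assoc2 le_diff_conv)
  have 3: "is_chain (lk K s) (d - card s) (lkc s z)" using lkc_chain[OF sc _ sK k] g unfolding good_def by blast
  have "(F - s) \<inter> s = {}" "(F - s) \<union> s = F" using F(2) by auto
  then have 4: "\<exists>G. lkc s z G \<noteq> 0" using lkc_nz[of s z "F - s"] F by auto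
  have 5: "\<forall>H. bdry (lk K s) (lkc s z) H = 0" using lkc_cycle[OF sc _ sK] good_cyc[OF g] by blast
  have 6: "\<forall>M. missing_face (lk K s) M \<longrightarrow> card M \<le> i+1" using lk_missing[OF sc sK] good_miss[OF g] by blast
  show ?thesis unfolding good_def using 1 2 3 4 5 6 by blast
qed

lemma good_exists_nz: "good i d K z \<Longrightarrow> \<exists>F. z F \<noteq> 0" unfolding good_def by blast



lemma supp_out:
  assumes g: "good i d K z" and F: "z F \<noteq> 0"
  shows "\<exists>m \<in> supp z. m \<notin> F"
proof (rule ccontr)
  assume "\<not> (\<exists>m \<in> supp z. m \<notin> F)"
  then have sub: "supp z \<subseteq> F" by blast
  have sc: "simplicial_complex K" using good_sc[OF g] .
  have FK: "F \<in> K" and cF: "card F = d+1" using good_chain[OF g F] by auto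
  have fF: "finite F" using sc_ffin[OF sc FK] .
  have only: "z G = 0" if "G \<noteq> F" for G
  proof (rule ccontr)
    assume "z G \<noteq> 0"
    then have "G \<subseteq> F" "card G = d+1" using sub good_chain[OF g] unfolding supp_def by blast+
    then have "G = F" using cF fF by (simp add: card_subset_eq)
    then show False using that by simp
  qed
  obtain x where x: "x \<in> F" using cF by fastforce
  define H where "H = F - {x}"
  define A where "A = {F' \<in> K. H \<subseteq> F' \<and> card (F' - H) = 1}"
  define f where "f F' = (-1::int) ^ card {y \<in> H. y < the_elem (F' - H)} * z F'" for F'
  have fA: "finite A" unfolding A_def using sc_fin[OF sc] by simp
  have "F - H = {x}" using x unfolding H_def by auto
  then have FA: "F \<in> A" unfolding A_def H_def using FK x by auto
  have "sum f A = f F + sum f (A - {F})" using fA FA by (simp add: sum.remove)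
  moreover have "sum f (A - {F}) = 0" by (rule sum.neutral) (auto simp: f_def only)
  moreover have "f F \<noteq> 0" unfolding f_def using F by simp
  ultimately have "sum f A \<noteq> 0" by simp
  moreover have "bdry K z H = sum f A" unfolding bdry_def A_def f_def by simp
  ultimately show False using good_cyc[OF g] by simp
qed

definition nb :: "nat \<Rightarrow> nat \<Rightarrow> nat" where "nb i d = d + d div i + 2"

lemma div_step: assumes "0 < (i::nat)" "k \<le> i" "k \<le> d" shows "d div i \<le> (d - k) div i + 1"
proof -
  have "d div i \<le> ((d - k) + i) div i" using assms by (intro div_le_mono) simp
  also have "\<dots> = (d - k) div i + 1" using assms(1) by (simp add: div_add_self2)
  finally show ?thesis .
qed

lemma boundA:
  assumes i: "0 < i" and g: "good i d K z"
  shows "nb i d \<le> card (supp z)"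
  using g
proof (induction d arbitrary: K z rule: less_induct)
  case (less d K z)
  note g = less.prems
  have sc: "simplicial_complex K" using good_sc[OF g] .
  obtain F where F: "z F \<noteq> 0" using good_exists_nz[OF g] by blast
  have FK: "F \<in> K" and cF: "card F = d+1" using good_chain[OF g F] by auto
  have fF: "finite F" using sc_ffin[OF sc FK] .
  have Fs: "F \<subseteq> supp z" using F unfolding supp_def by blast
  have fin: "finite (supp z)" using good_supp_fin[OF g] .
  obtain m where m: "m \<in> supp z" "m \<notin> F" using supp_out[OF g F] by blast
  have mK: "{m} \<in> K" using m(1) good_chain[OF g] sc_down[OF sc] unfolding supp_def by blast
  have "insert m F \<notin> K" using good_dim[OF g, of "insert m F"] cF fF m(2) by auto
  then obtain N where N: "N \<subseteq> insert m F" "N \<notin> K" "\<forall>Y. Y \<subset> N \<longrightarrow> Y \<in> K"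
    using min_nonface[of "insert m F" K] fF by blast
  have mN: "m \<in> N"
  proof (rule ccontr)
    assume "m \<notin> N" then have "N \<subseteq> F" using N(1) by blast
    then show False using N(2) sc_down[OF sc FK] by blast
  qed
  have fN: "finite N" using N(1) fF finite_subset by blast
  have "missing_face K N" unfolding missing_face_def using N fN by blast
  then have cN: "card N \<le> i+1" using good_miss[OF g] by blast
  define s where "s = N - {m}"
  have sF: "s \<subseteq> F" using N(1) unfolding s_def by blast
  have fs: "finite s" using fN s_def by simp
  have cs: "card s + 1 = card N" using card_Suc_Diff1[OF fN mN] unfolding s_def by simp
  have sne: "s \<noteq> {}" using mK N(2) mN unfolding s_def by (metis insert_Diff_single insert_absorb insert_not_empty s_def)
  have k1: "1 \<le> card s" using sne fs by (simp add: Suc_leI card_gt_0_iff)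
  have ki: "card s \<le> i" using cs cN by simp
  show ?case
  proof (cases "card s \<le> d")
    case False
    then have "card s = d + 1" using card_mono[OF fF sF] cF by simp
    then have "d < i" using ki by simp
    then have "nb i d = d + 2" unfolding nb_def by simp
    moreover have "card (insert m F) = d + 2" using fF m(2) cF by simp
    moreover have "card (insert m F) \<le> card (supp z)" using Fs m(1) fin by (intro card_mono) auto
    ultimately show ?thesis by simp
  next
    case True
    have gl: "good i (d - card s) (lk K s) (lkc s z)" using good_lk[OF g F sF True] .
    have IH: "nb i (d - card s) \<le> card (supp (lkc s z))"
    proof -
      have "d - card s < d" using k1 True by linarith
      then show ?thesis using less.IH[OF _ gl] by blast
    qed
    have sub: "supp (lkc s z) \<subseteq> supp z - s - {m}"
    proof
      fix x assume x: "x \<in> supp (lkc s z)"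
      then obtain F' where F': "x \<notin> s" "z F' \<noteq> 0" "s \<subseteq> F'" "x \<in> F'" using supp_lkc by metis
      have "x \<noteq> m"
      proof
        assume "x = m"
        then have "N \<subseteq> F'" using F' mN unfolding s_def by blast
        then show False using N(2) sc_down[OF sc] good_chain[OF g F'(2)] by blast
      qed
      then show "x \<in> supp z - s - {m}" using F' unfolding supp_def by blast
    qed
    have ms: "m \<notin> s" unfolding s_def by simp
    have sz: "s \<subseteq> supp z" using sF Fs by blast
    have "card (supp (lkc s z)) \<le> card (supp z - s - {m})" using sub fin by (intro card_mono) auto
    also have "\<dots> = card (supp z) - card s - 1" using fin sz m(1) ms
    proof -
      have "m \<in> supp z - s" using m(1) ms by blast
      then have "card (supp z - s - {m}) = card (supp z - s) - 1" using fin by (simp add: card_Diff_singleton)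
      moreover have "card (supp z - s) = card (supp z) - card s" using fin sz fs by (simp add: card_Diff_subset)
      ultimately show ?thesis by simp
    qed
    finally have c1: "card (supp (lkc s z)) \<le> card (supp z) - card s - 1" .
    have "card (insert m s) \<le> card (supp z)" using sz m(1) fin by (intro card_mono) auto
    then have "card s + 1 \<le> card (supp z)" using ms fs by simp
    then have c: "card (supp (lkc s z)) + card s + 1 \<le> card (supp z)" using c1 by linarith
    have "d div i \<le> (d - card s) div i + 1" using div_step[OF i ki True] .
    then show ?thesis using IH c True unfolding nb_def by linarith
  qed
qed



definition gc :: "'a set set \<Rightarrow> ('a set \<Rightarrow> int) \<Rightarrow> nat \<Rightarrow> nat" where
  "gc K z k = card {G \<in> K. G \<subseteq> supp z \<and> card G = k}"

lemma gc_le_fvec: assumes "simplicial_complex K" shows "gc K z (j+1) \<le> fvec K j"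
  unfolding gc_def fvec_def using sc_fin[OF assms] by (intro card_mono) auto

lemma gc_1: assumes g: "good i d K z" shows "gc K z 1 = card (supp z)"
proof -
  have "{G \<in> K. G \<subseteq> supp z \<and> card G = 1} = (\<lambda>v. {v}) ` supp z"
  proof
    show "{G \<in> K. G \<subseteq> supp z \<and> card G = 1} \<subseteq> (\<lambda>v. {v}) ` supp z"
      by (auto simp: card_1_singleton_iff)
    show "(\<lambda>v. {v}) ` supp z \<subseteq> {G \<in> K. G \<subseteq> supp z \<and> card G = 1}"
    proof
      fix G assume "G \<in> (\<lambda>v. {v}) ` supp z"
      then obtain v where v: "v \<in> supp z" "G = {v}" by blast
      then obtain F where "z F \<noteq> 0" "v \<in> F" unfolding supp_iff by blast
      then have "{v} \<in> K" using good_chain[OF g] sc_down[OF good_sc[OF g]] by blast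
      then show "G \<in> {G \<in> K. G \<subseteq> supp z \<and> card G = 1}" using v by simp
    qed
  qed
  then show ?thesis unfolding gc_def by (simp add: card_image)
qed

lemma double_count:
  assumes g: "good i d K z" and d1: "1 \<le> d"
  shows "(\<Sum>v\<in>supp z. gc (lk K {v}) (lkc {v} z) k) \<le> (k+1) * gc K z (k+1)"
proof -
  have sc: "simplicial_complex K" using good_sc[OF g] .
  have fin: "finite (supp z)" using good_supp_fin[OF g] .
  define A where "A = {G \<in> K. G \<subseteq> supp z \<and> card G = k+1}"
  have fA: "finite A" unfolding A_def using sc_fin[OF sc] by simp
  have le: "gc (lk K {v}) (lkc {v} z) k \<le> card {G \<in> A. v \<in> G}" if v: "v \<in> supp z" for v
  proof -
    define B where "B = {H \<in> lk K {v}. H \<subseteq> supp (lkc {v} z) \<and> card H = k}"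
    have "inj_on (insert v) B" unfolding B_def inj_on_def lk_def by blast
    moreover have "insert v ` B \<subseteq> {G \<in> A. v \<in> G}"
    proof
      fix G assume "G \<in> insert v ` B"
      then obtain H where H: "H \<in> lk K {v}" "H \<subseteq> supp (lkc {v} z)" "card H = k" "G = insert v H"
        unfolding B_def by blast
      have "H \<inter> {v} = {}" "H \<union> {v} \<in> K" using H(1) unfolding lk_def by auto
      moreover have "finite (H \<union> {v})" using calculation(2) sc_ffin[OF sc] by blast
      then have "finite H" by simp
      moreover have "H \<subseteq> supp z"
      proof
        fix x assume "x \<in> H"
        then have "x \<in> supp (lkc {v} z)" using H(2) by blast
        then obtain F where "z F \<noteq> 0" "x \<in> F" using supp_lkc[of x "{v}" z] by blast
        then show "x \<in> supp z" unfolding supp_iff by blast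
      qed
      ultimately have "G \<in> K" "G \<subseteq> supp z" "card G = k+1" "v \<in> G"
        using H(3,4) v by (simp_all add: insert_is_Un[symmetric] Un_commute disjoint_iff card_insert_if) blast
      then show "G \<in> {G \<in> A. v \<in> G}" unfolding A_def by blast
    qed
    ultimately have c1: "card (insert v ` B) \<le> card {G \<in> A. v \<in> G}" "card (insert v ` B) = card B"
      using fA by (metis (no_types, lifting) card_mono finite_subset mem_Collect_eq subsetI, simp add: card_image)
    from c1 have "card B \<le> card {G \<in> A. v \<in> G}" by simp
    then show ?thesis unfolding gc_def B_def .
  qed
  have "(\<Sum>v\<in>supp z. gc (lk K {v}) (lkc {v} z) k) \<le> (\<Sum>v\<in>supp z. card {G \<in> A. v \<in> G})"
    using le by (rule sum_mono)
  also have "\<dots> = (\<Sum>v\<in>supp z. \<Sum>G\<in>A. if v \<in> G then 1 else 0)"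
    using fA by (simp add: sum.inter_filter[symmetric])
  also have "\<dots> = (\<Sum>G\<in>A. \<Sum>v\<in>supp z. if v \<in> G then 1 else 0)" by (rule sum.swap)
  also have "\<dots> = (\<Sum>G\<in>A. k+1)"
  proof (rule sum.cong[OF refl])
    fix G assume "G \<in> A"
    then have "G \<subseteq> supp z" "card G = k+1" unfolding A_def by auto
    then have "{v \<in> supp z. v \<in> G} = G" by auto
    then have "(\<Sum>v\<in>supp z. if v \<in> G then 1 else (0::nat)) = card G"
      using fin by (simp add: sum.inter_filter[symmetric])
    then show "(\<Sum>v\<in>supp z. if v \<in> G then 1 else 0) = k+1" using \<open>card G = k+1\<close> by simp
  qed
  also have "\<dots> = (k+1) * gc K z (k+1)" unfolding gc_def A_def by simp
  finally show ?thesis .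
qed

lemma vertex_link:
  assumes g: "good i d K z" and d1: "1 \<le> d" and v: "v \<in> supp z"
  shows "good i (d - 1) (lk K {v}) (lkc {v} z)"
proof -
  obtain F where "z F \<noteq> 0" "v \<in> F" using v unfolding supp_iff by blast
  then show ?thesis using good_lk[OF g, of F "{v}"] d1 by simp
qed

lemma boundB:
  assumes i: "0 < i" and g: "good i d K z" and j: "j \<le> d mod i"
  shows "nb i d choose (j+1) \<le> gc K z (j+1)"
  using g j
proof (induction j arbitrary: d K z)
  case 0
  have "gc K z 1 = card (supp z)" using gc_1[OF "0.prems"(1)] .
  moreover have "nb i d \<le> card (supp z)" using boundA[OF i "0.prems"(1)] .
  ultimately show ?case by simp
next
  case (Suc j d K z)
  note g = Suc.prems(1)
  have d1: "1 \<le> d" using Suc.prems(2) by (cases d) auto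
  define a where "a = d div i"
  define b where "b = d mod i"
  have b1: "1 \<le> b" "b < i" using Suc.prems(2) i unfolding b_def by simp_all
  have dab: "d = a * i + b" unfolding a_def b_def by simp
  have e: "d - 1 = a * i + (b - 1)" using dab b1 by simp
  have bi: "b - 1 < i" using b1 by simp
  have dm: "(d - 1) mod i = d mod i - 1" "(d - 1) div i = d div i"
    unfolding e using bi by (simp_all add: a_def b_def)
  have nbd: "nb i (d - 1) = nb i d - 1" unfolding nb_def using dm d1 by simp
  let ?n = "nb i d"
  have n2: "?n \<ge> 2" unfolding nb_def by simp
  have each: "(?n - 1) choose (j+1) \<le> gc (lk K {v}) (lkc {v} z) (j+1)" if v: "v \<in> supp z" for v
    using Suc.IH[OF vertex_link[OF g d1 v]] Suc.prems(2) dm nbd by simp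
  have "card (supp z) * ((?n - 1) choose (j+1)) \<le> (\<Sum>v\<in>supp z. gc (lk K {v}) (lkc {v} z) (j+1))"
    using sum_mono[of "supp z" "\<lambda>v. (?n - 1) choose (j+1)", OF each] by simp
  also have "\<dots> \<le> (j+2) * gc K z (j+2)" using double_count[OF g d1, of "j+1"] by simp
  finally have a: "card (supp z) * ((?n - 1) choose (j+1)) \<le> (j+2) * gc K z (j+2)" .
  have "?n * ((?n - 1) choose (j+1)) \<le> card (supp z) * ((?n - 1) choose (j+1))"
    using boundA[OF i g] by simp
  moreover have "(j+2) * (?n choose (j+2)) = ?n * ((?n - 1) choose (j+1))"
    using Suc_times_binomial[of "j+1" "?n - 1"] n2 by (simp add: Suc_diff_le)
  ultimately have "(j+2) * (?n choose (j+2)) \<le> (j+2) * gc K z (j+2)" using a by linarith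
  then have "?n choose (j+2) \<le> gc K z (j+2)" by (subst (asm) mult_le_cancel1) simp
  moreover have "Suc j + 1 = j + 2" by simp
  ultimately show ?case by metis
qed



lemma supp_lkc_sub: "supp (lkc s z) \<subseteq> supp z - s"
proof
  fix x assume "x \<in> supp (lkc s z)"
  then obtain F where "x \<notin> s" "z F \<noteq> 0" "x \<in> F" using supp_lkc[of x s z] by blast
  then show "x \<in> supp z - s" using supp_iff[of x z] by blast
qed

lemma choose_ge: assumes "1 \<le> r" "r < a" shows "a \<le> a choose r"
proof -
  have "r + 1 + k \<le> (r + 1 + k) choose r" for k
  proof (induction k)
    case 0 show ?case using assms(1) by (cases r) (auto simp: binomial_Suc_n)
  next
    case (Suc k)
    have "(r + 1 + Suc k) choose r = ((r + 1 + k) choose r) + ((r + 1 + k) choose (r - 1))"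
      using assms(1) by (cases r) (simp_all add: binomial_Suc_Suc)
    moreover have "1 \<le> (r + 1 + k) choose (r - 1)" by (simp add: Suc_leI)
    ultimately show ?case using Suc.IH by simp
  qed
  from this[of "a - r - 1"] show ?thesis using assms by simp
qed

lemma full_subsets:
  assumes "finite S" "A \<subseteq> {G. G \<subseteq> S \<and> card G = k}" "card S choose k \<le> card A"
  shows "A = {G. G \<subseteq> S \<and> card G = k}"
proof -
  have f: "finite {G. G \<subseteq> S \<and> card G = k}" using assms(1) by simp
  have "card {G. G \<subseteq> S \<and> card G = k} = card S choose k" using n_subsets[OF assms(1)] .
  then show ?thesis using card_seteq[OF f assms(2)] assms(3) by simp
qed

lemma supp_faces:
  assumes i: "0 < i" and g: "good i d K z" and eq: "card (supp z) = nb i d"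
    and T: "finite T" "T \<subseteq> supp z" "card T \<le> d mod i + 1"
  shows "\<exists>F. z F \<noteq> 0 \<and> T \<subseteq> F"
  using T
proof (induction T rule: finite_induct)
  case empty then show ?case using good_exists_nz[OF g] by blast
next
  case (insert x s)
  have cs: "card s \<le> d mod i" using insert by simp
  obtain F0 where F0: "z F0 \<noteq> 0" "s \<subseteq> F0" using insert by auto
  have sd: "card s \<le> d" using cs by (meson le_trans mod_less_eq_dividend)
  have gl: "good i (d - card s) (lk K s) (lkc s z)" using good_lk[OF g F0 sd] .
  have A: "nb i (d - card s) \<le> card (supp (lkc s z))" using boundA[OF i gl] .
  have dv: "(d - card s) div i = d div i"
  proof -
    have "d - card s = (d div i) * i + (d mod i - card s)" using cs
      by (metis add_diff_assoc div_mult_mod_eq)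
    moreover have "d mod i - card s < i" using i by (meson le_less_trans diff_le_self mod_less_divisor)
    ultimately show ?thesis by simp
  qed
  have nbs: "nb i (d - card s) = nb i d - card s" unfolding nb_def using dv sd by simp
  have fin: "finite (supp z)" using good_supp_fin[OF g] .
  have sub: "supp (lkc s z) \<subseteq> supp z - s" by (rule supp_lkc_sub)
  have "card (supp z - s) = nb i d - card s" using eq insert.prems fin
    by (simp add: card_Diff_subset insert.hyps(1))
  then have "supp (lkc s z) = supp z - s" using A nbs sub fin
    by (metis card_seteq finite_Diff)
  moreover have "x \<in> supp z - s" using insert by auto
  ultimately have "x \<in> supp (lkc s z)" by simp
  then obtain F where "z F \<noteq> 0" "s \<subseteq> F" "x \<in> F" using supp_lkc[of x s z] by blast
  then show ?case by blast
qed



lemma missing_disjoint: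
  assumes i: "0 < i" and g: "good i d K z" and eq: "card (supp z) = nb i d"
    and rd: "d mod i + 1 \<le> d"
    and M1: "M1 \<subseteq> supp z" "card M1 = d mod i + 2" "M1 \<notin> K"
    and M2: "M2 \<subseteq> supp z" "card M2 = d mod i + 2" "M2 \<notin> K"
    and ne: "M1 \<noteq> M2"
  shows "M1 \<inter> M2 = {} \<and> d mod i + 1 = i"
proof -
  define r where "r = d mod i + 1"
  define q where "q = d div i"
  have sc: "simplicial_complex K" using good_sc[OF g] .
  have fin: "finite (supp z)" using good_supp_fin[OF g] .
  have f1: "finite M1" and f2: "finite M2" using M1(1) M2(1) fin finite_subset by blast+
  obtain a where a: "a \<in> M1" "a \<notin> M2"
  proof (rule ccontr)
    assume "\<not> thesis"
    then have "M1 \<subseteq> M2" using that by blast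
    then have "M1 = M2" using card_subset_eq[OF f2] M1(2) M2(2) by simp
    then show False using ne by simp
  qed
  define t where "t = M1 - {a}"
  have ct: "card t = r" unfolding t_def r_def using M1(2) a(1) f1 by simp
  have ft: "finite t" using f1 t_def by simp
  have tS: "t \<subseteq> supp z" using M1(1) t_def by blast
  obtain F0 where F0: "z F0 \<noteq> 0" "t \<subseteq> F0" using supp_faces[OF i g eq ft tS] ct r_def by auto
  have td: "card t \<le> d" using ct rd r_def by simp
  have gl: "good i (d - r) (lk K t) (lkc t z)" using good_lk[OF g F0 td] ct by simp
  have dq: "d = q * i + (r - 1)" unfolding q_def r_def by simp
  have q1: "1 \<le> q"
  proof (rule ccontr)
    assume "\<not> 1 \<le> q" then have "q = 0" by simp
    then show False using dq rd r_def by simp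
  qed
  have r1: "1 \<le> r" unfolding r_def by simp
  have qi1: "1 \<le> q * i" using q1 i by (simp add: Suc_leI)
  have dr0: "d - r = q * i - 1" using dq r1 by linarith
  obtain q' where q': "q = Suc q'" using q1 by (cases q) auto
  have qq: "q * i = i + q' * i" using q' by simp
  have e: "d - r = q' * i + (i - 1)"
    using dr0 qq i q' by simp
  have gen: "\<And>c. c < i \<Longrightarrow> (q' * i + c) div i = q' \<and> (q' * i + c) mod i = c" by simp
  have dr: "(d - r) div i = q - 1" "(d - r) mod i = i - 1" unfolding e using gen[of "i - 1"] i q' by simp_all
  have nbr: "nb i (d - r) = nb i d - r - 1"
    unfolding nb_def dr(1) q_def[symmetric] using dr0 dq r1 qi1 q1 by linarith
  have sub: "supp (lkc t z) \<subseteq> supp z - M1"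
  proof
    fix x assume x: "x \<in> supp (lkc t z)"
    then have "x \<in> supp z - t" using supp_lkc_sub by blast
    moreover have "x \<noteq> a"
    proof
      assume "x = a"
      then obtain F where F: "z F \<noteq> 0" "t \<subseteq> F" "a \<in> F" using x supp_lkc[of a t z] by blast
      then have "M1 \<subseteq> F" unfolding t_def by blast
      then show False using M1(3) sc_down[OF sc] good_chain[OF g F(1)] by blast
    qed
    ultimately show "x \<in> supp z - M1" unfolding t_def by blast
  qed
  have cM: "card (supp z - M1) = nb i d - r - 1" using eq M1 fin r_def f1 by (simp add: card_Diff_subset)
  have sw: "supp (lkc t z) = supp z - M1"
    using card_seteq[OF _ sub] boundA[OF i gl] nbr cM fin by simp
  define P where "P = M2 - M1"
  have PS: "P \<subseteq> supp (lkc t z)" using sw M2(1) P_def by blast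
  have fP: "finite P" using f2 P_def by simp
  have P0: "P \<noteq> {}"
  proof
    assume "P = {}" then have "M2 \<subseteq> M1" using P_def by blast
    then have "M2 = M1" using card_subset_eq[OF f1] M1(2) M2(2) by simp
    then show False using ne by simp
  qed
  have M2sub: "M2 \<subseteq> P \<union> t" unfolding P_def t_def using a by blast
  have Pi: "\<not> card P \<le> i"
  proof
    assume cP: "card P \<le> i"
    have cP1: "1 \<le> card P" using P0 fP by (simp add: Suc_leI card_gt_0_iff)
    have "card P - 1 \<le> (d - r) mod i" using dr cP by simp
    from boundB[OF i gl this] have B: "nb i (d - r) choose card P \<le> gc (lk K t) (lkc t z) (card P)"
      using cP1 by simp
    define A where "A = {G \<in> lk K t. G \<subseteq> supp (lkc t z) \<and> card G = card P}"
    have "A = {G. G \<subseteq> supp (lkc t z) \<and> card G = card P}"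
    proof (rule full_subsets)
      show "finite (supp (lkc t z))" using good_supp_fin[OF gl] .
      show "A \<subseteq> {G. G \<subseteq> supp (lkc t z) \<and> card G = card P}" unfolding A_def by blast
      show "card (supp (lkc t z)) choose card P \<le> card A"
        using B sw cM nbr unfolding A_def gc_def by simp
    qed
    then have "P \<in> lk K t" using PS unfolding A_def by blast
    then have "P \<union> t \<in> K" unfolding lk_def by blast
    then have "M2 \<in> K" using M2sub sc_down[OF sc] by blast
    then show False using M2(3) by simp
  qed
  have "card P \<le> card M2" using f2 P_def by (simp add: card_mono)
  moreover have "r \<le> i" unfolding r_def using i by (simp add: Suc_leI)
  ultimately have cPe: "card P = card M2" "r = i" using Pi M2(2) r_def by simp_all
  have "P = M2" using card_subset_eq[OF f2 _ cPe(1)] P_def by blast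
  then have "M1 \<inter> M2 = {}" using P_def by blast
  then show ?thesis using cPe(2) r_def by simp
qed



definition m0 :: "nat \<Rightarrow> nat \<Rightarrow> nat" where
  "m0 i d = (if d mod i + 1 = i then d div i + 1 else 1)"

lemma boundC_eq:
  assumes i: "0 < i" and g: "good i d K z" and eq: "card (supp z) = nb i d"
    and rd: "d mod i + 1 \<le> d"
  shows "nb i d choose (d mod i + 2) \<le> gc K z (d mod i + 2) + m0 i d"
proof -
  define S where "S = supp z"
  define k where "k = d mod i + 2"
  have fin: "finite S" using good_supp_fin[OF g] S_def by simp
  define X where "X = {G. G \<subseteq> S \<and> card G = k \<and> G \<notin> K}"
  define Y where "Y = {G \<in> K. G \<subseteq> S \<and> card G = k}"
  have all: "{G. G \<subseteq> S \<and> card G = k} = Y \<union> X" unfolding X_def Y_def by blast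
  have fall: "finite {G. G \<subseteq> S \<and> card G = k}" using fin by simp
  have fX: "finite X" "finite Y" using fall all by auto
  have "card {G. G \<subseteq> S \<and> card G = k} = card Y + card X"
    unfolding all by (rule card_Un_disjoint) (use fX in \<open>auto simp: X_def Y_def\<close>)
  then have tot: "nb i d choose k = card Y + card X" using n_subsets[OF fin, of k] eq S_def by simp
  have gcY: "gc K z k = card Y" unfolding gc_def Y_def S_def by simp
  have pair: "M1 \<inter> M2 = {} \<and> d mod i + 1 = i" if "M1 \<in> X" "M2 \<in> X" "M1 \<noteq> M2" for M1 M2
    using missing_disjoint[OF i g eq rd, of M1 M2] that unfolding X_def S_def k_def by blast
  have cX: "card X \<le> m0 i d"
  proof (cases "d mod i + 1 = i")
    case False
    then have "\<forall>a\<in>X. \<forall>b\<in>X. a = b" using pair by blast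
    then have "card X \<le> 1" using fX(1) by (simp add: card_le_Suc0_iff_eq)
    then show ?thesis unfolding m0_def using False by simp
  next
    case True
    have "pairwise disjnt X" using pair unfolding pairwise_def disjnt_def by blast
    moreover have "\<forall>A\<in>X. finite A" using fin unfolding X_def by (auto intro: finite_subset)
    ultimately have "card (\<Union>X) = sum card X" using card_Union_disjoint by blast
    also have "\<dots> = card X * k" unfolding X_def by simp
    finally have u: "card (\<Union>X) = card X * k" .
    have "\<Union>X \<subseteq> S" unfolding X_def by blast
    then have "card (\<Union>X) \<le> nb i d" using card_mono[OF fin] eq S_def by simp
    moreover have "nb i d = (d div i + 1) * k"
    proof -
      have d0: "d = d div i * i + d mod i" by simp
      have kk: "k = i + 1" unfolding k_def using True by simp
      have p: "(d div i + 1) * (i + 1) = d div i * i + d div i + i + 1" by (simp add: algebra_simps)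
      show ?thesis unfolding nb_def kk p using d0 True by linarith
    qed
    ultimately have "card X * k \<le> (d div i + 1) * k" using u by simp
    moreover have "0 < k" unfolding k_def by simp
    ultimately have "card X \<le> d div i + 1" using mult_le_cancel2 by blast
    then show ?thesis unfolding m0_def using True by simp
  qed
  show ?thesis using tot gcY cX unfolding k_def by simp
qed



lemma boundC:
  assumes i: "0 < i" and g: "good i d K z" and rd: "d mod i + 1 \<le> d"
  shows "nb i d choose (d mod i + 2) \<le> gc K z (d mod i + 2) + m0 i d"
  using g rd
proof (induction d arbitrary: K z rule: less_induct)
  case (less d K z)
  note g = less.prems(1) and rd = less.prems(2)
  define n where "n = nb i d"
  define N where "N = card (supp z)"
  have nN: "n \<le> N" using boundA[OF i g] n_def N_def by simp
  have d1: "1 \<le> d" using rd by simp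
  have m1: "1 \<le> m0 i d" unfolding m0_def by simp
  show ?case
  proof (cases "N = n")
    case True then show ?thesis using boundC_eq[OF i g _ rd] N_def n_def by simp
  next
    case False
    then have Nn: "n + 1 \<le> N" using nN by simp
    show ?thesis
    proof (cases "d mod i = 0")
      case True
      define q where "q = d div i"
      have dq: "d = q * i" using True unfolding q_def by (metis add_0_right div_mult_mod_eq)
      have q1: "1 \<le> q" using dq d1 by (cases q) auto
      obtain q' where q': "q = Suc q'" using q1 by (cases q) auto
      have e: "d - 1 = q' * i + (i - 1)" using dq q' i by simp
      have gen: "\<And>c. c < i \<Longrightarrow> (q' * i + c) div i = q'" by simp
      have dv: "(d - 1) div i = q'" unfolding e using gen[of "i - 1"] i by simp
      have nb1: "nb i (d - 1) = n - 2" unfolding n_def nb_def dv q_def[symmetric] using dq q' d1 by simp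
      have each: "n - 2 \<le> gc (lk K {v}) (lkc {v} z) 1" if v: "v \<in> supp z" for v
        using boundA[OF i vertex_link[OF g d1 v]] gc_1[OF vertex_link[OF g d1 v]] nb1 by simp
      have "N * (n - 2) \<le> (\<Sum>v\<in>supp z. gc (lk K {v}) (lkc {v} z) 1)"
        using sum_mono[of "supp z" "\<lambda>v. n - 2", OF each] N_def by simp
      also have "\<dots> \<le> 2 * gc K z 2" using double_count[OF g d1, of 1] by (simp only: one_add_one)
      finally have a: "N * (n - 2) \<le> 2 * gc K z 2" .
      have n2: "2 \<le> n" unfolding n_def nb_def by simp
      have b: "(n + 1) * (n - 2) \<le> N * (n - 2)" using Nn by (rule mult_le_mono1)
      have c: "2 * (n choose 2) = n * (n - 1)"
        using Suc_times_binomial[of 1 "n - 1"] n2 by (simp add: Suc_diff_le numeral_2_eq_2)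
      obtain p where p: "n = Suc (Suc p)" using n2 by (metis add_2_eq_Suc le_iff_add)
      have "n * (n - 1) = (n + 1) * (n - 2) + 2" unfolding p by (simp add: algebra_simps)
      then have "2 * (n choose 2) \<le> 2 * gc K z 2 + 2" using a b c by linarith
      then have "n choose 2 \<le> gc K z 2 + 1" by simp
      then have fin: "n choose 2 \<le> gc K z 2 + m0 i d" using m1 by linarith
      have e2: "d mod i + 2 = 2" using True by simp
      show ?thesis unfolding e2 using fin n_def by simp
    next
      case False
      have dm: "(d - 1) mod i = d mod i - 1" "(d - 1) div i = d div i"
      proof -
        define a where "a = d div i"
        define b where "b = d mod i"
        have b1: "1 \<le> b" "b < i" using False i unfolding b_def by simp_all
        have e: "d - 1 = a * i + (b - 1)" unfolding a_def b_def using b1 b_def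
          by (metis add_diff_assoc div_mult_mod_eq)
        have gen: "\<And>c. c < i \<Longrightarrow> (a * i + c) div i = a \<and> (a * i + c) mod i = c" by simp
        show "(d - 1) mod i = d mod i - 1" "(d - 1) div i = d div i"
          unfolding e using gen[of "b - 1"] b1 unfolding a_def b_def by simp_all
      qed
      define r where "r = d mod i + 1"
      have r2: "2 \<le> r" using False r_def by simp
      have ri: "r \<le> i" unfolding r_def using i by (simp add: Suc_leI)
      have nb1: "nb i (d - 1) = n - 1" unfolding n_def nb_def using dm d1 by simp
      have m01: "m0 i (d - 1) = 1" unfolding m0_def using dm False i ri r_def by simp
      have rd1: "(d - 1) mod i + 1 \<le> d - 1" using dm rd False by simp
      have idx: "(d - 1) mod i + 2 = r" using dm False r_def by simp
      define C where "C = (n - 1) choose r"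
      have each: "C \<le> gc (lk K {v}) (lkc {v} z) r + 1" if v: "v \<in> supp z" for v
        using less.IH[of "d - 1", OF _ vertex_link[OF g d1 v] rd1] d1 nb1 m01 idx C_def by simp
      have "N * C \<le> (\<Sum>v\<in>supp z. gc (lk K {v}) (lkc {v} z) r + 1)"
        using sum_mono[of "supp z" "\<lambda>v. C", OF each] N_def by simp
      also have "\<dots> = (\<Sum>v\<in>supp z. gc (lk K {v}) (lkc {v} z) r) + N"
        unfolding N_def by (subst sum.distrib) simp
      also have "\<dots> \<le> (r + 1) * gc K z (r + 1) + N" using double_count[OF g d1, of r] by simp
      finally have a: "N * C \<le> (r + 1) * gc K z (r + 1) + N" .
      have n1: "r < n - 1" unfolding n_def nb_def r_def using rd by simp
      have Cn: "n - 1 \<le> C" unfolding C_def using choose_ge[of r "n - 1"] r2 n1 by simp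
      have C1: "1 \<le> C" using Cn n1 by simp
      have a2: "N * (C - 1) \<le> (r + 1) * gc K z (r + 1)"
      proof -
        have "N * C = N * (C - 1) + N" using C1 by (metis add.commute mult.commute mult_Suc_right Suc_diff_1 One_nat_def Suc_le_eq)
        then show ?thesis using a by simp
      qed
      have b: "(n + 1) * (C - 1) \<le> N * (C - 1)" using Nn by (rule mult_le_mono1)
      have pe: "(n + 1) * (C - 1) + n + 1 = n * C + C"
      proof -
        obtain c where "C = Suc c" using C1 by (cases C) auto
        then show ?thesis by (simp add: algebra_simps)
      qed
      have n2: "1 \<le> n" unfolding n_def nb_def by simp
      have c: "(r + 1) * (n choose (r + 1)) = n * C"
        unfolding C_def using Suc_times_binomial[of r "n - 1"] n2 by (simp add: Suc_diff_le)
      have rm: "2 \<le> (r + 1) * m0 i d" using m1 r2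
        by (metis le_trans mult_le_mono nat_mult_1_right add_leD1 One_nat_def le_add1 le_refl)
      have "(r + 1) * (n choose (r + 1)) \<le> (r + 1) * (gc K z (r + 1) + m0 i d)"
        unfolding c distrib_left using a2 b pe Cn rm by linarith
      then have "n choose (r + 1) \<le> gc K z (r + 1) + m0 i d" by (subst (asm) mult_le_cancel1) simp
      moreover have "r + 1 = d mod i + 2" unfolding r_def by simp
      ultimately show ?thesis using n_def by simp
    qed
  qed
qed



fun pdisj :: "'a set list \<Rightarrow> bool" where
  "pdisj [] = True"
| "pdisj (V # L) = (V \<inter> \<Union>(set L) = {} \<and> pdisj L)"

lemma fold_sub:
  "F \<in> foldr (\<lambda>V K. sjoin (bd_simplex V) K) L {{}} \<Longrightarrow> F \<subseteq> \<Union>(set L)"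
proof (induction L arbitrary: F)
  case Nil then show ?case by simp
next
  case (Cons V L)
  then obtain F1 G where "F = F1 \<union> G" "F1 \<in> bd_simplex V" "G \<in> foldr (\<lambda>V K. sjoin (bd_simplex V) K) L {{}}"
    unfolding sjoin_def by auto
  then show ?case using Cons.IH unfolding bd_simplex_def by fastforce
qed

lemma fold_noblock:
  "pdisj L \<Longrightarrow> F \<in> foldr (\<lambda>V K. sjoin (bd_simplex V) K) L {{}} \<Longrightarrow> B \<in> set L \<Longrightarrow> \<not> B \<subseteq> F"
proof (induction L arbitrary: F)
  case Nil then show ?case by simp
next
  case (Cons V L)
  then obtain F1 G where FG: "F = F1 \<union> G" "F1 \<subseteq> V" "F1 \<noteq> V" "G \<in> foldr (\<lambda>V K. sjoin (bd_simplex V) K) L {{}}"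
    unfolding sjoin_def bd_simplex_def by auto
  have GU: "G \<subseteq> \<Union>(set L)" using fold_sub[OF FG(4)] .
  have dis: "V \<inter> \<Union>(set L) = {}" "pdisj L" using Cons.prems(1) by auto
  show ?case
  proof (cases "B = V")
    case True
    show ?thesis
    proof
      assume "B \<subseteq> F"
      then have "V \<subseteq> F1" using True FG(1) GU dis(1) by blast
      then show False using FG(2,3) by blast
    qed
  next
    case False
    then have B: "B \<in> set L" using Cons.prems(3) by simp
    show ?thesis
    proof
      assume "B \<subseteq> F"
      moreover have "B \<inter> F1 = {}" using B FG(2) dis(1) by blast
      ultimately have "B \<subseteq> G" using FG(1) by blast
      then show False using Cons.IH[OF dis(2) FG(4) B] by simp
    qed
  qed
qed

definition blk :: "nat \<Rightarrow> nat \<Rightarrow> nat set" where "blk i m = {m * (i + 1) ..< (m + 1) * (i + 1)}"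

lemma S_blocks_eq: "S_blocks i d = map (blk i) [0..<d div i] @ [{d div i * (i + 1) ..< d div i * (i + 1) + (d mod i + 1) + 1}]"
  unfolding S_blocks_def blk_def Let_def by simp

lemma pdisj_blocks: "a \<le> q \<Longrightarrow> pdisj (map (blk i) [a..<q] @ [{q * (i + 1) ..< c}])"
proof (induction "q - a" arbitrary: a)
  case 0 then show ?case by simp
next
  case (Suc k)
  then have aq: "a < q" by simp
  have up: "[a..<q] = a # [Suc a..<q]" using aq by (simp add: upt_conv_Cons)
  have IH: "pdisj (map (blk i) [Suc a..<q] @ [{q * (i + 1) ..< c}])" using Suc aq by simp
  have "blk i a \<inter> \<Union>(set (map (blk i) [Suc a..<q] @ [{q * (i + 1) ..< c}])) = {}"
  proof -
    have "x \<notin> blk i a" if "x \<in> \<Union>(set (map (blk i) [Suc a..<q] @ [{q * (i + 1) ..< c}]))" for x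
    proof -
      have "(Suc a) * (i + 1) \<le> x"
      proof -
        from that consider (m) m where "m \<in> {Suc a..<q}" "x \<in> blk i m" | (t) "x \<in> {q * (i + 1) ..< c}" by auto
        then show ?thesis
        proof cases
          case m
          then have "Suc a * (i + 1) \<le> m * (i + 1)" by (intro mult_le_mono1) simp
          then show ?thesis using m unfolding blk_def by simp
        next
          case t
          have "Suc a * (i + 1) \<le> q * (i + 1)" using aq by (intro mult_le_mono1) simp
          then show ?thesis using t by simp
        qed
      qed
      then show ?thesis unfolding blk_def by simp
    qed
    then show ?thesis by blast
  qed
  then show ?case unfolding up using IH by simp
qed

lemma blocks_sub: "B \<in> set (S_blocks i d) \<Longrightarrow> B \<subseteq> {0 ..< d div i * (i + 1) + (d mod i + 1) + 1}"
proof -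
  assume B: "B \<in> set (S_blocks i d)"
  show ?thesis
  proof (cases "B \<in> blk i ` {0..<d div i}")
    case True
    then obtain m where m: "m < d div i" "B = blk i m" by auto
    then have "(m + 1) * (i + 1) \<le> d div i * (i + 1)" by (intro mult_le_mono1) simp
    then have "B \<subseteq> {0..< d div i * (i + 1)}" using m unfolding blk_def by auto
    moreover have "{0..<(x::nat)} \<subseteq> {0..<x + y}" for x y by auto
    ultimately show ?thesis by (metis add.assoc order_trans)
  next
    case False
    then show ?thesis using B unfolding S_blocks_eq by auto
  qed
qed

lemma S_faces:
  assumes "F \<in> S_complex i d"
  shows "F \<subseteq> {0 ..< nb i d}" "\<And>B. B \<in> set (S_blocks i d) \<Longrightarrow> \<not> B \<subseteq> F"
proof -
  have e: "d div i * (i + 1) + (d mod i + 1) + 1 = nb i d" unfolding nb_def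
    by (simp add: algebra_simps)
  have "F \<subseteq> \<Union>(set (S_blocks i d))" using fold_sub[of F "S_blocks i d"] assms unfolding S_complex_def by blast
  moreover have "\<Union>(set (S_blocks i d)) \<subseteq> {0 ..< nb i d}" using blocks_sub[of _ i d] unfolding e by blast
  ultimately show "F \<subseteq> {0 ..< nb i d}" by blast
  have "pdisj (S_blocks i d)" unfolding S_blocks_eq using pdisj_blocks[of 0 "d div i"] by simp
  then show "\<And>B. B \<in> set (S_blocks i d) \<Longrightarrow> \<not> B \<subseteq> F" using fold_noblock assms unfolding S_complex_def by blast
qed



lemma S_fvec_le: "fvec (S_complex i d) j \<le> nb i d choose (j + 1)"
proof -
  have "{F \<in> S_complex i d. card F = j + 1} \<subseteq> {G. G \<subseteq> {0..<nb i d} \<and> card G = j + 1}"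
    using S_faces(1) by blast
  then have "fvec (S_complex i d) j \<le> card {G. G \<subseteq> {0..<nb i d} \<and> card G = j + 1}"
    unfolding fvec_def by (intro card_mono) auto
  then show ?thesis using n_subsets[of "{0..<nb i d}" "j+1"] by simp
qed

lemma blk_inj: "inj_on (blk i) A"
proof (rule inj_onI)
  fix m m' assume "blk i m = blk i m'"
  then have a: "m * (i + 1) \<in> blk i m'" "m' * (i + 1) \<in> blk i m" unfolding blk_def by auto
  have "m' * (i + 1) \<le> m * (i + 1)" "m * (i + 1) < (m' + 1) * (i + 1)" using a(1) unfolding blk_def by auto
  then have "m' \<le> m" "m < m' + 1" by (simp_all only: mult_le_cancel2 mult_less_cancel2)
  then show "m = m'" by simp
qed

lemma S_fvec_r:
  assumes i: "0 < i"
  shows "fvec (S_complex i d) (d mod i + 1) + m0 i d \<le> nb i d choose (d mod i + 2)"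
proof -
  define U where "U = {0..<nb i d}"
  define k where "k = d mod i + 2"
  define q where "q = d div i"
  define T where "T = {q * (i + 1) ..< q * (i + 1) + (d mod i + 1) + 1}"
  have bl: "set (S_blocks i d) = blk i ` {0..<q} \<union> {T}" unfolding S_blocks_eq T_def q_def by auto
  define Bs where "Bs = {B \<in> set (S_blocks i d). card B = k}"
  have fU: "finite U" unfolding U_def by simp
  have fB: "finite Bs" unfolding Bs_def by simp
  have BsU: "Bs \<subseteq> {G. G \<subseteq> U \<and> card G = k}"
    unfolding Bs_def U_def using blocks_sub[of _ i d] unfolding nb_def by (auto simp: algebra_simps)
  have sub: "{F \<in> S_complex i d. card F = k} \<subseteq> {G. G \<subseteq> U \<and> card G = k} - Bs"
    using S_faces[of _ i d] unfolding U_def Bs_def by blast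
  have "fvec (S_complex i d) (d mod i + 1) \<le> card ({G. G \<subseteq> U \<and> card G = k} - Bs)"
    unfolding fvec_def using sub fU by (intro card_mono) (auto simp: k_def)
  also have "\<dots> = card {G. G \<subseteq> U \<and> card G = k} - card Bs"
    using BsU fU by (intro card_Diff_subset) (auto intro: finite_subset)
  also have "\<dots> = (nb i d choose k) - card Bs" using n_subsets[OF fU, of k] unfolding U_def by simp
  finally have a: "fvec (S_complex i d) (d mod i + 1) \<le> (nb i d choose k) - card Bs" .
  have "card Bs \<le> nb i d choose k"
    using card_mono[OF _ BsU] n_subsets[OF fU, of k] fU unfolding U_def by simp
  moreover have TB: "T \<in> Bs" unfolding Bs_def bl T_def k_def by simp
  moreover have "m0 i d \<le> card Bs"
  proof (cases "d mod i + 1 = i")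
    case False
    have "card Bs \<noteq> 0" using TB fB by auto
    then show ?thesis unfolding m0_def using False by simp
  next
    case True
    have "card (blk i m) = k" for m unfolding blk_def k_def using True by (simp add: algebra_simps)
    then have "Bs = blk i ` {0..<q} \<union> {T}" using TB unfolding Bs_def bl by auto
    moreover have "T \<notin> blk i ` {0..<q}"
    proof
      assume "T \<in> blk i ` {0..<q}"
      then obtain m where m: "m < q" "T = blk i m" by auto
      have "q * (i + 1) \<in> T" unfolding T_def by simp
      then have "q * (i + 1) < (m + 1) * (i + 1)" using m unfolding blk_def by simp
      then have "q < m + 1" by (simp only: mult_less_cancel2)
      then show False using m by simp
    qed
    ultimately have "card Bs = q + 1" using card_image[OF blk_inj[of i "{0..<q}"]] by simp
    then show ?thesis unfolding m0_def q_def using True by simp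
  qed
  ultimately show ?thesis using a unfolding k_def by linarith
qed



lemma classC_good:
  assumes "class_C i d \<Delta>"
  shows "\<exists>z. good i d \<Delta> z"
proof -
  have sc: "simplicial_complex \<Delta>" and dim: "complex_dim \<Delta> d" and h: "reduced_homology_nonzero \<Delta> d"
    and mf: "\<forall>F. missing_face \<Delta> F \<longrightarrow> card F \<le> i + 1"
    using assms unfolding class_C_def by auto
  obtain z where z: "is_chain \<Delta> d z" "\<forall>G. bdry \<Delta> z G = 0" "\<not> (\<exists>b. is_chain \<Delta> (d + 1) b \<and> bdry \<Delta> b = z)"
    using h unfolding reduced_homology_nonzero_def by blast
  have nz: "\<exists>F. z F \<noteq> 0"
  proof (rule ccontr)
    assume "\<not> (\<exists>F. z F \<noteq> 0)"
    then have "z = (\<lambda>_. 0)" by auto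
    moreover have "is_chain \<Delta> (d + 1) (\<lambda>_. 0)" unfolding is_chain_def by simp
    moreover have "bdry \<Delta> (\<lambda>_. 0) = (\<lambda>_. 0)" unfolding bdry_def by (rule ext) simp
    ultimately show False using z(3) by metis
  qed
  have "\<forall>F\<in>\<Delta>. card F \<le> d + 1" using dim unfolding complex_dim_def by blast
  then have "good i d \<Delta> z" unfolding good_def using sc z nz mf by blast
  then show ?thesis by blast
qed

theorem theorem1p1:
  fixes i d q r :: nat and \<Delta> :: "'a::linorder set set"
  assumes "0 < i" and "i \<le> d + 1"
    and "d + 1 = q * i + r" and "1 \<le> r" and "r \<le> i"
    and "class_C i d \<Delta>"
  shows "\<forall>j. 1 \<le> j \<and> j \<le> r \<longrightarrow> fvec \<Delta> j \<ge> fvec (S_complex i d) j"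
proof (intro allI impI)
  fix j assume j: "1 \<le> j \<and> j \<le> r"
  have i: "0 < i" using assms(1) .
  obtain z where g: "good i d \<Delta> z" using classC_good[OF assms(6)] by blast
  have sc: "simplicial_complex \<Delta>" using good_sc[OF g] .
  have e: "d = q * i + (r - 1)" using assms(3,4) by simp
  have gen: "\<And>c. c < i \<Longrightarrow> (q * i + c) div i = q \<and> (q * i + c) mod i = c" by simp
  have ri: "r - 1 < i" using assms(4,5) by simp
  have dm: "d mod i = r - 1" "d div i = q" using gen[OF ri] e by simp_all
  show "fvec (S_complex i d) j \<le> fvec \<Delta> j"
  proof (cases "j < r")
    case True
    then have "j \<le> d mod i" using dm by simp
    from boundB[OF i g this] have "nb i d choose (j + 1) \<le> gc \<Delta> z (j + 1)" .
    moreover have "gc \<Delta> z (j + 1) \<le> fvec \<Delta> j" using gc_le_fvec[OF sc] .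
    moreover have "fvec (S_complex i d) j \<le> nb i d choose (j + 1)" by (rule S_fvec_le)
    ultimately show ?thesis by linarith
  next
    case False
    then have jr: "j = r" using j by simp
    show ?thesis
    proof (cases "r \<le> d")
      case True
      then have rd: "d mod i + 1 \<le> d" using dm assms(4) by simp
      have C: "nb i d choose (d mod i + 2) \<le> gc \<Delta> z (d mod i + 2) + m0 i d" using boundC[OF i g rd] .
      have S: "fvec (S_complex i d) (d mod i + 1) + m0 i d \<le> nb i d choose (d mod i + 2)" using S_fvec_r[OF i] .
      have G: "gc \<Delta> z (d mod i + 1 + 1) \<le> fvec \<Delta> (d mod i + 1)" using gc_le_fvec[OF sc] .
      have jj: "j = d mod i + 1" using jr dm assms(4) by simp
      have "d mod i + 1 + 1 = d mod i + 2" by simp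
      then show ?thesis using C S G jj by (metis add_le_cancel_right le_trans)
    next
      case False
      then have rd: "r = d + 1" using assms(3,4) e by linarith
      have q0: "q = 0"
      proof (rule ccontr)
        assume "q \<noteq> 0"
        then have "i \<le> q * i" by simp
        then show False using assms(3,1) rd by linarith
      qed
      have nbd: "nb i d = d + 2" unfolding nb_def using dm q0 by simp
      have E: "{F \<in> S_complex i d. card F = j + 1} = {}"
      proof (rule ccontr)
        assume "{F \<in> S_complex i d. card F = j + 1} \<noteq> {}"
        then obtain F where F: "F \<in> S_complex i d" "card F = d + 2" using jr rd by auto
        have "F \<subseteq> {0..<nb i d}" using S_faces(1)[OF F(1)] .
        then have FU: "F = {0..<nb i d}" using F(2) nbd by (metis card_atLeastLessThan card_subset_eq diff_zero finite_atLeastLessThan)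
        obtain B where B: "B \<in> set (S_blocks i d)" unfolding S_blocks_def Let_def by auto
        have "B \<subseteq> F" using blocks_sub[OF B] FU unfolding nb_def by (simp add: algebra_simps)
        then show False using S_faces(2)[OF F(1) B] by simp
      qed
      have "fvec (S_complex i d) j = 0" unfolding fvec_def E by simp
      then show ?thesis by simp
    qed
  qed
qed


end
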